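(* Let $T$ be a finite set, let $(X_t)_{t\in T}$ be a random process with $\mathbf{E}|X_t|<\infty$ for all $t$, and let $(m_t)_{t\in T}$ be real numbers. Then $$\mathbf{E}\Big[\sup_{t\in T}\{X_t+m_t\}\Big]=\sup_{\mu}\Big\{\mathscr{F}(X,\mu)+\sum_{t\in T} m_t\,\mu(\{t\})\Big\},$$ where the supremum is over all probability measures $\mu$ on $T$.
   Context: For a finite set $T$, a probability measure $P_X$ on $\mathbb{R}^T$ with $\int\|x\|\,P_X(dx)<\infty$ and a probability measure $\mu$ on $T$, Fernique's functional is $\mathscr{F}(P_X,\mu)=\sup \mathbf{E}[X_Z]$, where the supremum is over all couplings $(X,Z)$ (pairs of random variables on a common probability space) with $X\sim P_X$ and $Z\sim\mu$. For a random process $X=(X_t)_{t\in T}$ one writes $\mathscr{F}(X,\mu)=\mathscr{F}(P_X,\mu)$ with $P_X$ the law of $X$. *)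

theory Defs
  imports "HOL-Probability.Probability"
begin

text \<open>Couplings of a law P on R^T (here real^'t) and a probability mu on the finite
type 't, represented by their joint law: a probability measure on
R^T x T whose marginals are P and mu.\<close>

definition coupling :: "(real^'t) measure \<Rightarrow> ('t::finite) pmf \<Rightarrow> ((real^'t) \<times> 't) measure \<Rightarrow> bool" where
  "coupling P \<mu> C \<longleftrightarrow> prob_space C \<and>
     sets C = sets (borel \<Otimes>\<^sub>M count_space UNIV) \<and>
     distr C borel fst = P \<and>
     distr C (count_space UNIV) snd = measure_pmf \<mu>"

definition fernique :: "(real^'t) measure \<Rightarrow> ('t::finite) pmf \<Rightarrow> real" where
  "fernique P \<mu> = Sup {(\<integral>p. (fst p) $ (snd p) \<partial>C) | C. coupling P \<mu> C}"

end

theory Submission imports Defs begin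


lemma vec_meas:
  fixes f :: "'t::finite \<Rightarrow> 'a \<Rightarrow> real"
  assumes "\<And>t. f t \<in> borel_measurable M"
  shows "(\<lambda>\<omega>. (\<chi> t. f t \<omega>) :: real^'t) \<in> borel_measurable M"
proof (subst borel_measurable_euclidean_space, intro ballI)
  fix i :: "real^'t" assume "i \<in> Basis"
  then obtain j where j: "i = axis j 1" by (auto simp: Basis_vec_def)
  show "(\<lambda>\<omega>. (\<chi> t. f t \<omega>) \<bullet> i) \<in> borel_measurable M"
    using assms[of j] by (simp add: j inner_axis)
qed

lemma nth_meas: "(\<lambda>x::real^'t::finite. x $ t) \<in> borel_measurable borel"
  by (intro borel_measurable_continuous_onI continuous_intros)

lemma app_meas: "(\<lambda>p::(real^'t::finite)\<times>'t. fst p $ snd p) \<in> borel_measurable (borel \<Otimes>\<^sub>M count_space UNIV)"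
proof (rule measurable_compose_countable[where f="\<lambda>i p. fst p $ i" and g=snd])
  fix i :: 't
  show "(\<lambda>p::(real^'t)\<times>'t. fst p $ i) \<in> borel_measurable (borel \<Otimes>\<^sub>M count_space UNIV)"
    using measurable_comp[OF measurable_fst nth_meas] by (simp add: comp_def)
qed (rule measurable_snd)

lemma pair_snd:
  assumes "prob_space P"
  shows "distr (P \<Otimes>\<^sub>M measure_pmf \<mu>) (count_space UNIV) snd = measure_pmf \<mu>"
proof (intro measure_eqI)
  fix A assume A: "A \<in> sets (distr (P \<Otimes>\<^sub>M measure_pmf \<mu>) (count_space UNIV) snd)"
  have "emeasure (distr (P \<Otimes>\<^sub>M measure_pmf \<mu>) (count_space UNIV) snd) A = emeasure (P \<Otimes>\<^sub>M measure_pmf \<mu>) (space P \<times> A)"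
    using A by (subst emeasure_distr) (auto simp: space_pair_measure intro!: arg_cong2[where f=emeasure])
  also have "\<dots> = emeasure (measure_pmf \<mu>) A"
    using assms by (subst measure_pmf.emeasure_pair_measure_Times) (auto simp: prob_space.emeasure_space_1)
  finally show "emeasure (distr (P \<Otimes>\<^sub>M measure_pmf \<mu>) (count_space UNIV) snd) A = emeasure (measure_pmf \<mu>) A" .
qed simp


theorem mainTheorem4:
  fixes M :: "'a measure" and X :: "'t::finite \<Rightarrow> 'a \<Rightarrow> real" and m :: "'t \<Rightarrow> real"
  assumes "prob_space M"
    and "\<And>t. integrable M (X t)"
  shows "(\<integral>\<omega>. Max (range (\<lambda>t. X t \<omega> + m t)) \<partial>M) =
         (SUP \<mu>::'t pmf. fernique (distr M borel (\<lambda>\<omega>. \<chi> t. X t \<omega>)) \<mu> + (\<Sum>t\<in>UNIV. m t * pmf \<mu> t))"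
proof -
  interpret prob_space M by fact
  note intX = assms(2)
  have measX[measurable]: "X t \<in> borel_measurable M" for t using intX by auto
  define Xv where "Xv = (\<lambda>\<omega>. (\<chi> t. X t \<omega>) :: real^'t)"
  have Xv_meas[measurable]: "Xv \<in> borel_measurable M"
    unfolding Xv_def by (rule vec_meas) simp
  define P where "P = distr M borel Xv"
  define Mx' where "Mx' = (\<lambda>x::real^'t. Max (range (\<lambda>t. x $ t + m t)))"
  define L where "L = (\<integral>\<omega>. Max (range (\<lambda>t. X t \<omega> + m t)) \<partial>M)"
  define g' where "g' = (\<lambda>x::real^'t. \<Sum>t\<in>UNIV. \<bar>x $ t\<bar>)"
  have nthm[measurable]: "(\<lambda>x::real^'t. x $ t) \<in> borel_measurable borel" for t by (rule nth_meas)
  have Mx'_meas[measurable]: "Mx' \<in> borel_measurable borel"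
    unfolding Mx'_def by measurable
  have g'_meas[measurable]: "g' \<in> borel_measurable borel"
    unfolding g'_def by measurable
  have Mx'_Xv: "Mx' (Xv \<omega>) = Max (range (\<lambda>t. X t \<omega> + m t))" for \<omega>
    by (simp add: Mx'_def Xv_def)
  have intS: "integrable M (\<lambda>\<omega>. \<Sum>t\<in>UNIV. \<bar>X t \<omega>\<bar> + \<bar>m t\<bar>)"
    using intX by (auto intro!: Bochner_Integration.integrable_sum Bochner_Integration.integrable_add integrable_abs)
  have intg: "integrable M (\<lambda>\<omega>. g' (Xv \<omega>))"
    unfolding g'_def Xv_def using intX by (auto intro!: Bochner_Integration.integrable_sum integrable_abs)
  have Max_bound: "\<bar>Max (range (\<lambda>t. X t \<omega> + m t))\<bar> \<le> (\<Sum>t\<in>UNIV. \<bar>X t \<omega>\<bar> + \<bar>m t\<bar>)" for \<omega>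
  proof -
    have "Max (range (\<lambda>t. X t \<omega> + m t)) \<in> range (\<lambda>t. X t \<omega> + m t)"
      by (rule Max_in) auto
    then obtain t0 where t0: "Max (range (\<lambda>t. X t \<omega> + m t)) = X t0 \<omega> + m t0" by blast
    have "\<bar>X t0 \<omega> + m t0\<bar> \<le> \<bar>X t0 \<omega>\<bar> + \<bar>m t0\<bar>" by simp
    also have "\<dots> \<le> (\<Sum>t\<in>UNIV. \<bar>X t \<omega>\<bar> + \<bar>m t\<bar>)"
      by (rule member_le_sum) auto
    finally show ?thesis using t0 by simp
  qed
  have intMx: "integrable M (\<lambda>\<omega>. Mx' (Xv \<omega>))"
    unfolding Mx'_Xv
    by (rule Bochner_Integration.integrable_bound[OF intS]) (auto intro!: AE_I2 order.trans[OF Max_bound])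
  have Pprob: "prob_space P" unfolding P_def by (rule prob_space_distr) simp
  have sP: "sets P = sets borel" "space P = space borel" unfolding P_def by auto

  have keyA: "(\<integral>p. fst p $ snd p \<partial>C) + (\<Sum>t\<in>UNIV. m t * pmf \<mu> t) \<le> L"
    if cC: "coupling P \<mu> C" for \<mu> C
  proof -
    interpret C: prob_space C using cC by (simp add: coupling_def)
    have sC: "sets C = sets (borel \<Otimes>\<^sub>M count_space UNIV)" using cC by (simp add: coupling_def)
    have dfst: "distr C borel fst = P" using cC by (simp add: coupling_def)
    have dsnd: "distr C (count_space UNIV) snd = measure_pmf \<mu>" using cC by (simp add: coupling_def)
    have mC: "measurable C N = measurable (borel \<Otimes>\<^sub>M count_space UNIV) N" for N :: "'b measure"
      by (rule measurable_cong_sets) (use sC in auto)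
    have fstC[measurable]: "fst \<in> measurable C borel" unfolding mC by (rule measurable_fst)
    have sndC[measurable]: "snd \<in> measurable C (count_space UNIV)" unfolding mC by (rule measurable_snd)
    have appC[measurable]: "(\<lambda>p. fst p $ snd p) \<in> borel_measurable C" unfolding mC by (rule app_meas)
    have intgC: "integrable C (\<lambda>p. g' (fst p))"
    proof -
      have "integrable (distr C borel fst) g'"
        unfolding dfst P_def by (subst integrable_distr_eq) (auto simp: intg)
      then show ?thesis by (subst (asm) integrable_distr_eq) auto
    qed
    have intapp: "integrable C (\<lambda>p. fst p $ snd p)"
    proof (rule Bochner_Integration.integrable_bound[OF intgC appC], intro AE_I2)
      fix p :: "(real^'t) \<times> 't"
      have "\<bar>fst p $ snd p\<bar> \<le> (\<Sum>t\<in>UNIV. \<bar>fst p $ t\<bar>)"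
        by (rule member_le_sum) auto
      also have "\<dots> \<le> \<bar>g' (fst p)\<bar>" unfolding g'_def by (rule abs_ge_self)
      finally show "norm (fst p $ snd p) \<le> norm (g' (fst p))" by simp
    qed
    have intm_pmf: "integrable (measure_pmf \<mu>) m"
      by (rule integrable_measure_pmf_finite) auto
    have intmC: "integrable C (\<lambda>p. m (snd p))"
      using intm_pmf unfolding dsnd[symmetric] by (subst (asm) integrable_distr_eq) auto
    have summ: "(\<Sum>t\<in>UNIV. m t * pmf \<mu> t) = (\<integral>p. m (snd p) \<partial>C)"
    proof -
      have "(\<Sum>t\<in>UNIV. m t * pmf \<mu> t) = (\<integral>t. m t \<partial>measure_pmf \<mu>)"
        by (rule integral_measure_pmf_real[symmetric]) auto
      also have "\<dots> = (\<integral>p. m (snd p) \<partial>C)"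
        unfolding dsnd[symmetric] by (subst integral_distr) auto
      finally show ?thesis .
    qed
    have intMxC: "integrable C (\<lambda>p. Mx' (fst p))"
    proof -
      have "integrable (distr C borel fst) Mx'"
        unfolding dfst P_def by (subst integrable_distr_eq) (auto simp: intMx)
      then show ?thesis by (subst (asm) integrable_distr_eq) auto
    qed
    have "(\<integral>p. fst p $ snd p \<partial>C) + (\<Sum>t\<in>UNIV. m t * pmf \<mu> t)
          = (\<integral>p. fst p $ snd p + m (snd p) \<partial>C)"
      unfolding summ using intapp intmC by (simp add: Bochner_Integration.integral_add)
    also have "\<dots> \<le> (\<integral>p. Mx' (fst p) \<partial>C)"
    proof (rule integral_mono)
      show "integrable C (\<lambda>p. fst p $ snd p + m (snd p))" using intapp intmC by auto
      show "integrable C (\<lambda>p. Mx' (fst p))" by (rule intMxC)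
      fix p :: "(real^'t) \<times> 't"
      show "fst p $ snd p + m (snd p) \<le> Mx' (fst p)"
        unfolding Mx'_def by (rule Max_ge) auto
    qed
    also have "\<dots> = (\<integral>x. Mx' x \<partial>distr C borel fst)"
      by (subst integral_distr) auto
    also have "\<dots> = L"
      unfolding dfst P_def L_def by (subst integral_distr) (auto simp: Mx'_Xv)
    finally show ?thesis .
  qed

  have bdd_coup: "bdd_above {(\<integral>p. (fst p) $ (snd p) \<partial>C) | C. coupling P \<mu> C}" for \<mu>
    using keyA[of \<mu>] by (intro bdd_aboveI[where M="L - (\<Sum>t\<in>UNIV. m t * pmf \<mu> t)"]) force
  have keyB: "fernique P \<mu> + (\<Sum>t\<in>UNIV. m t * pmf \<mu> t) \<le> L" for \<mu>
  proof -
    have "coupling P \<mu> (P \<Otimes>\<^sub>M measure_pmf \<mu>)"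
      unfolding coupling_def
    proof (intro conjI)
      show "prob_space (P \<Otimes>\<^sub>M measure_pmf \<mu>)"
        using Pprob by (intro prob_space_pair) (auto simp: prob_space_measure_pmf)
      show "sets (P \<Otimes>\<^sub>M measure_pmf \<mu>) = sets (borel \<Otimes>\<^sub>M count_space UNIV)"
        by (rule sets_pair_measure_cong) (auto simp: sP)
      show "distr (P \<Otimes>\<^sub>M measure_pmf \<mu>) borel fst = P"
      proof -
        have "distr (P \<Otimes>\<^sub>M measure_pmf \<mu>) borel fst = distr (P \<Otimes>\<^sub>M measure_pmf \<mu>) P fst"
          by (rule distr_cong) (auto simp: sP)
        also have "\<dots> = P" by (rule measure_pmf.distr_pair_fst)
        finally show ?thesis .
      qed
      show "distr (P \<Otimes>\<^sub>M measure_pmf \<mu>) (count_space UNIV) snd = measure_pmf \<mu>"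
        by (rule pair_snd[OF Pprob])
    qed
    then have ne: "{(\<integral>p. (fst p) $ (snd p) \<partial>C) | C. coupling P \<mu> C} \<noteq> {}" by blast
    have "fernique P \<mu> \<le> L - (\<Sum>t\<in>UNIV. m t * pmf \<mu> t)"
      unfolding fernique_def using keyA[of \<mu>] by (intro cSup_least[OF ne]) force
    then show ?thesis by simp
  qed

  obtain xs where xs: "set xs = (UNIV :: 't set)" using finite_list[of "UNIV :: 't set"] by auto
  define Mx where "Mx = (\<lambda>\<omega>. Max (range (\<lambda>t. X t \<omega> + m t)))"
  have Mx_meas[measurable]: "Mx \<in> borel_measurable M" unfolding Mx_def by measurable
  define Z where "Z = (\<lambda>\<omega>. xs ! (LEAST i. X (xs ! i) \<omega> + m (xs ! i) = Mx \<omega>))"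
  have Z_meas[measurable]: "Z \<in> measurable M (count_space UNIV)"
    unfolding Z_def by measurable
  have Z_prop: "X (Z \<omega>) \<omega> + m (Z \<omega>) = Mx \<omega>" for \<omega>
  proof -
    have "Mx \<omega> \<in> range (\<lambda>t. X t \<omega> + m t)" unfolding Mx_def by (rule Max_in) auto
    then obtain t0 where t0: "Mx \<omega> = X t0 \<omega> + m t0" by blast
    obtain i where "xs ! i = t0" using xs by (metis UNIV_I in_set_conv_nth)
    then have "\<exists>i. X (xs ! i) \<omega> + m (xs ! i) = Mx \<omega>" using t0 by auto
    then show ?thesis unfolding Z_def by (rule LeastI_ex)
  qed
  define \<mu> where "\<mu> = Abs_pmf (distr M (count_space UNIV) Z)"
  have mu_eq: "measure_pmf \<mu> = distr M (count_space UNIV) Z"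
    unfolding \<mu>_def
  proof (rule Abs_pmf_inverse, intro CollectI conjI)
    show ps: "prob_space (distr M (count_space UNIV) Z)" by (rule prob_space_distr) simp
    show ss: "sets (distr M (count_space UNIV) Z) = UNIV" by simp
    interpret D: prob_space "distr M (count_space UNIV) Z" by (rule ps)
    show "AE x in distr M (count_space UNIV) Z. measure (distr M (count_space UNIV) Z) {x} \<noteq> 0"
      by (subst D.AE_support_countable[OF ss]) (auto intro!: exI[of _ UNIV])
  qed
  define C where "C = distr M (borel \<Otimes>\<^sub>M count_space UNIV) (\<lambda>\<omega>. (Xv \<omega>, Z \<omega>))"
  have pair_meas[measurable]: "(\<lambda>\<omega>. (Xv \<omega>, Z \<omega>)) \<in> measurable M (borel \<Otimes>\<^sub>M count_space UNIV)"
    by measurable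
  have cC: "coupling P \<mu> C"
    unfolding coupling_def C_def
  proof (intro conjI)
    show "prob_space (distr M (borel \<Otimes>\<^sub>M count_space UNIV) (\<lambda>\<omega>. (Xv \<omega>, Z \<omega>)))"
      by (rule prob_space_distr) simp
    show "sets (distr M (borel \<Otimes>\<^sub>M count_space UNIV) (\<lambda>\<omega>. (Xv \<omega>, Z \<omega>))) = sets (borel \<Otimes>\<^sub>M count_space UNIV)"
      by simp
    show "distr (distr M (borel \<Otimes>\<^sub>M count_space UNIV) (\<lambda>\<omega>. (Xv \<omega>, Z \<omega>))) borel fst = P"
      unfolding P_def by (subst distr_distr) (auto simp: comp_def)
    show "distr (distr M (borel \<Otimes>\<^sub>M count_space UNIV) (\<lambda>\<omega>. (Xv \<omega>, Z \<omega>))) (count_space UNIV) snd = measure_pmf \<mu>"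
      unfolding mu_eq by (subst distr_distr) (auto simp: comp_def)
  qed
  have XZ_meas[measurable]: "(\<lambda>\<omega>. X (Z \<omega>) \<omega>) \<in> borel_measurable M"
    by (rule measurable_compose_countable[OF measX Z_meas])
  have intXZ: "integrable M (\<lambda>\<omega>. X (Z \<omega>) \<omega>)"
  proof (rule Bochner_Integration.integrable_bound[OF intS XZ_meas], intro AE_I2)
    fix \<omega>
    have "\<bar>X (Z \<omega>) \<omega>\<bar> \<le> \<bar>X (Z \<omega>) \<omega>\<bar> + \<bar>m (Z \<omega>)\<bar>" by simp
    also have "\<dots> \<le> (\<Sum>t\<in>UNIV. \<bar>X t \<omega>\<bar> + \<bar>m t\<bar>)"
      by (rule member_le_sum) auto
    also have "\<dots> \<le> \<bar>\<Sum>t\<in>UNIV. \<bar>X t \<omega>\<bar> + \<bar>m t\<bar>\<bar>" by (rule abs_ge_self)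
    finally show "norm (X (Z \<omega>) \<omega>) \<le> norm (\<Sum>t\<in>UNIV. \<bar>X t \<omega>\<bar> + \<bar>m t\<bar>)" by simp
  qed
  have intmZ: "integrable M (\<lambda>\<omega>. m (Z \<omega>))"
  proof -
    have "integrable (measure_pmf \<mu>) m" by (rule integrable_measure_pmf_finite) auto
    then show ?thesis unfolding mu_eq by (subst (asm) integrable_distr_eq) auto
  qed
  have val1: "(\<integral>p. fst p $ snd p \<partial>C) = (\<integral>\<omega>. X (Z \<omega>) \<omega> \<partial>M)"
    unfolding C_def by (subst integral_distr[OF pair_meas app_meas]) (simp add: Xv_def)
  have val2: "(\<Sum>t\<in>UNIV. m t * pmf \<mu> t) = (\<integral>\<omega>. m (Z \<omega>) \<partial>M)"
  proof -
    have "(\<Sum>t\<in>UNIV. m t * pmf \<mu> t) = (\<integral>t. m t \<partial>measure_pmf \<mu>)"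
      by (rule integral_measure_pmf_real[symmetric]) auto
    also have "\<dots> = (\<integral>\<omega>. m (Z \<omega>) \<partial>M)"
      unfolding mu_eq by (subst integral_distr) auto
    finally show ?thesis .
  qed
  have L_eq: "L = (\<integral>p. fst p $ snd p \<partial>C) + (\<Sum>t\<in>UNIV. m t * pmf \<mu> t)"
  proof -
    have "L = (\<integral>\<omega>. X (Z \<omega>) \<omega> + m (Z \<omega>) \<partial>M)"
      unfolding L_def using Z_prop by (simp add: Mx_def)
    also have "\<dots> = (\<integral>\<omega>. X (Z \<omega>) \<omega> \<partial>M) + (\<integral>\<omega>. m (Z \<omega>) \<partial>M)"
      using intXZ intmZ by (rule Bochner_Integration.integral_add)
    finally show ?thesis using val1 val2 by simp
  qed
  have bddS: "bdd_above (range (\<lambda>\<mu>. fernique P \<mu> + (\<Sum>t\<in>UNIV. m t * pmf \<mu> t)))"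
    using keyB by (intro bdd_aboveI[where M=L]) auto
  have "L \<le> fernique P \<mu> + (\<Sum>t\<in>UNIV. m t * pmf \<mu> t)"
  proof -
    have "(\<integral>p. fst p $ snd p \<partial>C) \<le> fernique P \<mu>"
      unfolding fernique_def using cC by (intro cSup_upper[OF _ bdd_coup]) blast
    then show ?thesis using L_eq by simp
  qed
  also have "\<dots> \<le> (SUP \<mu>. fernique P \<mu> + (\<Sum>t\<in>UNIV. m t * pmf \<mu> t))"
    by (rule cSUP_upper[OF _ bddS]) simp
  finally have ge: "L \<le> (SUP \<mu>. fernique P \<mu> + (\<Sum>t\<in>UNIV. m t * pmf \<mu> t))" .
  have le: "(SUP \<mu>. fernique P \<mu> + (\<Sum>t\<in>UNIV. m t * pmf \<mu> t)) \<le> L"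
    using keyB by (intro cSUP_least) auto
  show ?thesis using ge le unfolding L_def P_def Xv_def by simp
qed

end
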